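(* Let $G$ be a simple cubic graph on vertex set $[n]$ with girth at least $5$, let $A$ be a MAI set of $G$ and $B=V(G)\setminus A$, and let $Y$ (resp. $Z$) be the set of vertices of degree $1$ in $G[A]$ (resp. in $G[B]$). Then (i) each vertex of $Z$ has at most one neighbour in $Y$; (ii) each vertex of $Y$ has at most one neighbour in $Z$.
   Context: A vertex set $A$ of a graph $G$ is an AI set (almost independent set) if $\Delta(G[A])\le 1$, i.e. every component of the induced subgraph $G[A]$ is a single vertex or a single edge. A vertex set $A$ is a MAI set (maximum almost independent set) of $G$ if (M1) $A$ is an AI set, (M2) $A$ contains an independent set of size $\alpha(G)$, and (M3) $A$ has maximum cardinality among all vertex sets satisfying (M1) and (M2). $\alpha(G)$ is the independence number of $G$. *)

theory Defs
  imports Main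
begin

definition simple_graph :: "nat set \<Rightarrow> (nat \<Rightarrow> nat \<Rightarrow> bool) \<Rightarrow> bool" where
  "simple_graph V E \<longleftrightarrow> finite V \<and> (\<forall>u v. E u v \<longrightarrow> u \<in> V \<and> v \<in> V) \<and>
     (\<forall>u v. E u v \<longrightarrow> E v u) \<and> (\<forall>v. \<not> E v v)"

definition nbrs :: "(nat \<Rightarrow> nat \<Rightarrow> bool) \<Rightarrow> nat set \<Rightarrow> nat \<Rightarrow> nat set" where
  "nbrs E S v = {u \<in> S. E v u}"

definition cubic :: "nat set \<Rightarrow> (nat \<Rightarrow> nat \<Rightarrow> bool) \<Rightarrow> bool" where
  "cubic V E \<longleftrightarrow> (\<forall>v \<in> V. card (nbrs E V v) = 3)"

definition girth_ge_5 :: "nat set \<Rightarrow> (nat \<Rightarrow> nat \<Rightarrow> bool) \<Rightarrow> bool" where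
  "girth_ge_5 V E \<longleftrightarrow>
     (\<forall>a b c. \<not> (E a b \<and> E b c \<and> E c a)) \<and>
     (\<forall>a b c d. distinct [a, b, c, d] \<longrightarrow> \<not> (E a b \<and> E b c \<and> E c d \<and> E d a))"

definition indep_set :: "nat set \<Rightarrow> (nat \<Rightarrow> nat \<Rightarrow> bool) \<Rightarrow> nat set \<Rightarrow> bool" where
  "indep_set V E I \<longleftrightarrow> I \<subseteq> V \<and> (\<forall>u \<in> I. \<forall>v \<in> I. \<not> E u v)"

definition indep_number :: "nat set \<Rightarrow> (nat \<Rightarrow> nat \<Rightarrow> bool) \<Rightarrow> nat" where
  "indep_number V E = Max (card ` {I. indep_set V E I})"

definition ai_set :: "nat set \<Rightarrow> (nat \<Rightarrow> nat \<Rightarrow> bool) \<Rightarrow> nat set \<Rightarrow> bool" where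
  "ai_set V E A \<longleftrightarrow> A \<subseteq> V \<and> (\<forall>v \<in> A. card (nbrs E A v) \<le> 1)"

definition ai_with_max_indep :: "nat set \<Rightarrow> (nat \<Rightarrow> nat \<Rightarrow> bool) \<Rightarrow> nat set \<Rightarrow> bool" where
  "ai_with_max_indep V E A \<longleftrightarrow> ai_set V E A \<and>
     (\<exists>I \<subseteq> A. indep_set V E I \<and> card I = indep_number V E)"

definition mai_set :: "nat set \<Rightarrow> (nat \<Rightarrow> nat \<Rightarrow> bool) \<Rightarrow> nat set \<Rightarrow> bool" where
  "mai_set V E A \<longleftrightarrow> ai_with_max_indep V E A \<and>
     (\<forall>A'. ai_with_max_indep V E A' \<longrightarrow> card A' \<le> card A)"

end

theory Submission
  imports Defs
begin

locale L =
  fixes V :: "nat set" and E :: "nat \<Rightarrow> nat \<Rightarrow> bool" and A :: "nat set"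
  assumes sg: "simple_graph V E" and cub: "cubic V E" and gir: "girth_ge_5 V E"
    and mai: "mai_set V E A"
begin

lemma finV: "finite V" using sg by (simp add: simple_graph_def)
lemma symE: "E u v \<Longrightarrow> E v u" using sg by (simp add: simple_graph_def)
lemma irr: "\<not> E v v" using sg by (simp add: simple_graph_def)
lemma inV: "E u v \<Longrightarrow> u \<in> V \<and> v \<in> V" using sg by (simp add: simple_graph_def)
lemma tri: assumes "E a b" "E b c" "E c a" shows False
proof -
  have "\<forall>a b c. \<not> (E a b \<and> E b c \<and> E c a)" using gir unfolding girth_ge_5_def by (rule conjunct1)
  hence "\<not> (E a b \<and> E b c \<and> E c a)" by blast
  thus False using assms by blast
qed
lemma sq: assumes "distinct [a,b,c,d]" "E a b" "E b c" "E c d" "E d a" shows False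
proof -
  have "\<forall>a b c d. distinct [a, b, c, d] \<longrightarrow> \<not> (E a b \<and> E b c \<and> E c d \<and> E d a)"
    using gir unfolding girth_ge_5_def by (rule conjunct2)
  hence "\<not> (E a b \<and> E b c \<and> E c d \<and> E d a)" using assms(1) by blast
  thus False using assms by blast
qed
lemma AV: "A \<subseteq> V" using mai by (simp add: mai_set_def ai_with_max_indep_def ai_set_def)
lemma finA: "finite A" using AV finV finite_subset by blast
lemma aideg: "v \<in> A \<Longrightarrow> card (nbrs E A v) \<le> 1"
  using mai by (simp add: mai_set_def ai_with_max_indep_def ai_set_def)
lemma finnb: "S \<subseteq> V \<Longrightarrow> finite (nbrs E S v)"
  by (rule finite_subset[OF _ finV]) (auto simp: nbrs_def)

lemma alpha_bound: assumes "indep_set V E J" shows "card J \<le> indep_number V E"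
proof -
  have "{I. indep_set V E I} \<subseteq> Pow V" by (auto simp: indep_set_def)
  hence "finite {I. indep_set V E I}" using finV by (meson finite_Pow_iff finite_subset)
  thus ?thesis unfolding indep_number_def using assms by auto
qed

lemma exI': obtains I where "I \<subseteq> A" "indep_set V E I" "card I = indep_number V E"
  using mai unfolding mai_set_def ai_with_max_indep_def by blast

lemma maxA: "ai_with_max_indep V E A' \<Longrightarrow> card A' \<le> card A"
  using mai unfolding mai_set_def by blast

lemma swap:
  assumes "I \<subseteq> A" "indep_set V E I" "p \<in> A" "E y p" "nbrs E A p \<subseteq> {y}"
  shows "indep_set V E (insert p (I - {y}))" "card I \<le> card (insert p (I - {y}))"
    "insert p (I - {y}) \<subseteq> A"
proof -
  have pn: "\<And>u. u \<in> A \<Longrightarrow> E p u \<Longrightarrow> u = y" using assms(5) by (auto simp: nbrs_def)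
  show "indep_set V E (insert p (I - {y}))"
    unfolding indep_set_def
  proof (intro conjI ballI)
    show "insert p (I - {y}) \<subseteq> V" using assms(2,3) AV unfolding indep_set_def by blast
  next
    fix u v assume u: "u \<in> insert p (I - {y})" and v: "v \<in> insert p (I - {y})"
    show "\<not> E u v"
    proof
      assume Euv: "E u v"
      show False
      proof (cases "u = p")
        case True
        thus False using pn[of v] v Euv assms(1) irr by auto
      next
        case False
        hence uI: "u \<in> I" "u \<noteq> y" using u by auto
        show False
        proof (cases "v = p")
          case True
          thus False using pn[of u] uI assms(1) symE[OF Euv] by auto
        next
          case False
          thus False using v uI assms(2) Euv unfolding indep_set_def by auto
        qed
      qed
    qed
  qed
  show "insert p (I - {y}) \<subseteq> A" using assms by auto
  have fI: "finite I" using assms(1) finA finite_subset by blast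
  show "card I \<le> card (insert p (I - {y}))"
  proof (cases "y \<in> I")
    case True
    have "p \<notin> I" using True assms(2,4) unfolding indep_set_def by blast
    hence "p \<notin> I - {y}" by auto
    hence "card (insert p (I - {y})) = card (I - {y}) + 1" using fI by simp
    also have "\<dots> = card I" using True fI
      by (metis One_nat_def Suc_pred add.commute card_Diff_singleton card_gt_0_iff empty_iff plus_1_eq_Suc)
    finally show ?thesis by simp
  next
    case False
    hence "I \<subseteq> insert p (I - {y})" by auto
    thus ?thesis using fI by (simp add: card_mono)
  qed
qed

lemma partner:
  assumes "y \<in> A" "card (nbrs E A y) = 1"
  obtains p where "nbrs E A y = {p}" "p \<in> A" "E y p" "nbrs E A p = {y}"
proof -
  obtain p where p: "nbrs E A y = {p}" using assms(2) card_1_singletonE by blast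
  hence pA: "p \<in> A" and Eyp: "E y p" by (auto simp: nbrs_def)
  have yin: "y \<in> nbrs E A p" using assms(1) Eyp symE by (auto simp: nbrs_def)
  have "finite (nbrs E A p)" using finnb AV by blast
  hence "nbrs E A p = {y}" using aideg[OF pA] yin by (metis card_le_Suc0_iff_eq One_nat_def singletonI subsetI subset_antisym singletonD)
  thus ?thesis using that p pA Eyp by blast
qed

lemma Adeg2:
  assumes "z \<in> V - A" "card (nbrs E (V - A) z) = 1"
  shows "card (nbrs E A z) = 2"
proof -
  have "nbrs E V z = nbrs E A z \<union> nbrs E (V - A) z" using AV by (auto simp: nbrs_def)
  moreover have "nbrs E A z \<inter> nbrs E (V - A) z = {}" by (auto simp: nbrs_def)
  moreover have "finite (nbrs E A z)" "finite (nbrs E (V - A) z)" using finnb AV by auto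
  ultimately have "card (nbrs E V z) = card (nbrs E A z) + 1" using assms(2) card_Un_disjoint by metis
  moreover have "card (nbrs E V z) = 3" using cub assms(1) by (simp add: cubic_def)
  ultimately show ?thesis by simp
qed

lemma two_elems:
  assumes "\<not> card S \<le> 1"
  obtains a b where "a \<in> S" "b \<in> S" "a \<noteq> b"
proof -
  have "finite S" using assms card.infinite by fastforce
  thus ?thesis using assms that card_le_Suc0_iff_eq by (metis One_nat_def)
qed

lemma Adeg2_eq:
  assumes "z \<in> V - A" "card (nbrs E (V - A) z) = 1" "y1 \<in> nbrs E A z" "y2 \<in> nbrs E A z" "y1 \<noteq> y2"
  shows "nbrs E A z = {y1, y2}"
proof -
  have c: "card (nbrs E A z) = 2" using Adeg2 assms(1,2) by blast
  have f: "finite (nbrs E A z)" using finnb AV by blast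
  have "{y1, y2} \<subseteq> nbrs E A z" using assms by auto
  moreover have "card {y1, y2} = 2" using assms(5) by simp
  ultimately show ?thesis using c f by (metis card_subset_eq)
qed

lemma part1:
  assumes "z \<in> V - A" "card (nbrs E (V - A) z) = 1"
  shows "card (nbrs E {v \<in> A. card (nbrs E A v) = 1} z) \<le> 1"
proof (rule ccontr)
  assume "\<not> ?thesis"
  then obtain y1 y2 where y1: "y1 \<in> nbrs E {v \<in> A. card (nbrs E A v) = 1} z"
    and y2: "y2 \<in> nbrs E {v \<in> A. card (nbrs E A v) = 1} z" and ne: "y1 \<noteq> y2"
    by (rule two_elems)
  have y1A: "y1 \<in> A" "card (nbrs E A y1) = 1" "E z y1" using y1 by (auto simp: nbrs_def)
  have y2A: "y2 \<in> A" "card (nbrs E A y2) = 1" "E z y2" using y2 by (auto simp: nbrs_def)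
  obtain p1 where p1: "p1 \<in> A" "E y1 p1" "nbrs E A p1 = {y1}" using partner y1A by metis
  obtain p2 where p2: "p2 \<in> A" "E y2 p2" "nbrs E A p2 = {y2}" using partner y2A by metis
  have zA: "nbrs E A z = {y1, y2}" using Adeg2_eq[OF assms, of y1 y2] y1A y2A ne by (auto simp: nbrs_def)
  obtain I where I: "I \<subseteq> A" "indep_set V E I" "card I = indep_number V E" by (rule exI')
  define I1 where "I1 = insert p1 (I - {y1})"
  have I1: "indep_set V E I1" "card I \<le> card I1" "I1 \<subseteq> A"
    using swap[OF I(1,2) p1(1,2)] p1(3) unfolding I1_def by auto
  define I2 where "I2 = insert p2 (I1 - {y2})"
  have I2: "indep_set V E I2" "card I1 \<le> card I2" "I2 \<subseteq> A"
    using swap[OF I1(3,1) p2(1,2)] p2(3) unfolding I2_def by auto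
  have "p2 \<noteq> y1"
  proof
    assume "p2 = y1"
    thus False using tri[of z y1 y2] y1A(3) symE[OF y2A(3)] symE[OF p2(2)] by simp
  qed
  moreover have "p1 \<noteq> y1" "p2 \<noteq> y2" using p1(2) p2(2) irr by auto
  ultimately have y12: "y1 \<notin> I2" "y2 \<notin> I2" unfolding I2_def I1_def using ne by auto
  have zV: "z \<in> V" "z \<notin> A" using assms by auto
  have "indep_set V E (insert z I2)"
  proof -
    have "\<And>u. u \<in> I2 \<Longrightarrow> \<not> E z u"
    proof
      fix u assume "u \<in> I2" "E z u"
      hence "u \<in> nbrs E A z" using I2(3) by (auto simp: nbrs_def)
      thus False using zA y12 \<open>u \<in> I2\<close> by auto
    qed
    hence "\<And>u. u \<in> I2 \<Longrightarrow> \<not> E u z" using symE by blast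
    thus ?thesis using I2(1) zV irr \<open>\<And>u. u \<in> I2 \<Longrightarrow> \<not> E z u\<close> unfolding indep_set_def by auto
  qed
  hence "card (insert z I2) \<le> indep_number V E" by (rule alpha_bound)
  moreover have "card (insert z I2) = card I2 + 1"
    using I2(3) zV finA finite_subset by (metis Suc_eq_plus1 card_insert_disjoint in_mono)
  ultimately show False using I I1 I2 by simp
qed

lemma part2:
  assumes "y \<in> A" "card (nbrs E A y) = 1"
  shows "card (nbrs E {v \<in> V - A. card (nbrs E (V - A) v) = 1} y) \<le> 1"
proof (rule ccontr)
  let ?Z = "{v \<in> V - A. card (nbrs E (V - A) v) = 1}"
  assume "\<not> ?thesis"
  then obtain z1 z2 where z1: "z1 \<in> nbrs E ?Z y" and z2: "z2 \<in> nbrs E ?Z y" and ne: "z1 \<noteq> z2"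
    by (rule two_elems)
  have z1Z: "z1 \<in> V - A" "card (nbrs E (V - A) z1) = 1" "E y z1" using z1 by (auto simp: nbrs_def)
  have z2Z: "z2 \<in> V - A" "card (nbrs E (V - A) z2) = 1" "E y z2" using z2 by (auto simp: nbrs_def)
  obtain p where p: "p \<in> A" "E y p" "nbrs E A p = {y}" using partner assms by metis
  have key: "\<exists>a. nbrs E A z = {y, a} \<and> a \<noteq> y \<and> nbrs E A a = {}" if zZ: "z \<in> V - A" "card (nbrs E (V - A) z) = 1" "E y z" for z
  proof -
    have c: "card (nbrs E A z) = 2" using Adeg2 zZ by blast
    have yin: "y \<in> nbrs E A z" using zZ assms symE by (auto simp: nbrs_def)
    obtain a where a: "a \<in> nbrs E A z" "a \<noteq> y"
    proof -
      have "\<not> card (nbrs E A z) \<le> 1" using c by simp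
      then obtain u v where "u \<in> nbrs E A z" "v \<in> nbrs E A z" "u \<noteq> v" by (rule two_elems)
      thus ?thesis using that by blast
    qed
    have eq: "nbrs E A z = {y, a}" using Adeg2_eq[OF zZ(1,2) yin a(1)] a(2) by auto
    have aA: "a \<in> A" using a by (auto simp: nbrs_def)
    have "nbrs E A a = {}"
    proof (rule ccontr)
      assume "nbrs E A a \<noteq> {}"
      moreover have "finite (nbrs E A a)" using finnb AV by blast
      ultimately have "card (nbrs E A a) = 1" using aideg[OF aA] by (simp add: card_gt_0_iff le_antisym Suc_leI)
      hence "{y, a} \<subseteq> nbrs E {v \<in> A. card (nbrs E A v) = 1} z" using a aA assms symE[OF zZ(3)] by (auto simp: nbrs_def)
      hence "\<not> card (nbrs E {v \<in> A. card (nbrs E A v) = 1} z) \<le> 1"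
        using a(2) finnb[of "{v \<in> A. card (nbrs E A v) = 1}" z] AV
        by (metis (no_types, lifting) One_nat_def card_le_Suc0_iff_eq insertCI subsetD mem_Collect_eq subsetI)
      thus False using part1[OF zZ(1,2)] by blast
    qed
    thus ?thesis using eq a(2) by blast
  qed
  obtain a1 where a1: "nbrs E A z1 = {y, a1}" "a1 \<noteq> y" "nbrs E A a1 = {}" using key z1Z by blast
  obtain a2 where a2: "nbrs E A z2 = {y, a2}" "a2 \<noteq> y" "nbrs E A a2 = {}" using key z2Z by blast
  have a1A: "a1 \<in> A" "E z1 a1" using a1(1) by (auto simp: nbrs_def)
  have a2A: "a2 \<in> A" "E z2 a2" using a2(1) by (auto simp: nbrs_def)
  have z12: "\<not> E z1 z2" using tri[of y z1 z2] z1Z(3) symE[OF z2Z(3)] by blast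
  have z21: "\<not> E z2 z1" using z12 symE by blast
  have a12: "a1 \<noteq> a2"
  proof
    assume "a1 = a2"
    hence "distinct [y, z1, a1, z2]" using z1Z z2Z a1A a1 ne assms(1) by auto
    thus False using sq[of y z1 a1 z2] z1Z(3) a1A(2) symE[OF a2A(2)] symE[OF z2Z(3)] \<open>a1 = a2\<close> by simp
  qed
  have sing: "\<And>S x. S \<subseteq> {x} \<Longrightarrow> card S \<le> 1"
    by (metis card.empty card.insert subset_singletonD finite.emptyI empty_iff le_refl zero_le_one One_nat_def)
  define A' where "A' = insert z1 (insert z2 (A - {y}))"
  have A'V: "A' \<subseteq> V" using AV z1Z z2Z unfolding A'_def by auto
  have nz1: "\<And>v. v \<in> A \<Longrightarrow> E z1 v \<Longrightarrow> v = y \<or> v = a1" using a1(1) by (auto simp: nbrs_def)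
  have nz2: "\<And>v. v \<in> A \<Longrightarrow> E z2 v \<Longrightarrow> v = y \<or> v = a2" using a2(1) by (auto simp: nbrs_def)
  have "card (nbrs E A' v) \<le> 1" if vA': "v \<in> A'" for v
  proof -
    consider "v = z1" | "v = z2" | "v = a1" | "v = a2" | "v \<in> A" "v \<noteq> a1" "v \<noteq> a2" "v \<noteq> y"
      using vA' unfolding A'_def by blast
    thus ?thesis
    proof cases
      case 1
      have "nbrs E A' v \<subseteq> {a1}" using 1 nz1 z12 irr unfolding A'_def nbrs_def by auto
      thus ?thesis by (rule sing)
    next
      case 2
      have "nbrs E A' v \<subseteq> {a2}" using 2 nz2 z21 irr unfolding A'_def nbrs_def by auto
      thus ?thesis by (rule sing)
    next
      case 3
      have "\<not> E a1 z2" using nz2[OF a1A(1)] a12 a1(2) symE by blast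
      hence "nbrs E A' v \<subseteq> {z1}" using 3 a1(3) unfolding A'_def nbrs_def by auto
      thus ?thesis by (rule sing)
    next
      case 4
      have "\<not> E a2 z1" using nz1[OF a2A(1)] a12 a2(2) symE by blast
      hence "nbrs E A' v \<subseteq> {z2}" using 4 a2(3) unfolding A'_def nbrs_def by auto
      thus ?thesis by (rule sing)
    next
      case 5
      have "\<not> E v z1" "\<not> E v z2" using 5 nz1[OF 5(1)] nz2[OF 5(1)] symE by blast+
      hence "nbrs E A' v \<subseteq> nbrs E A v" using 5 unfolding A'_def nbrs_def by auto
      moreover have "finite (nbrs E A v)" using finnb AV by blast
      ultimately show ?thesis using aideg[OF 5(1)] by (meson card_mono le_trans)
    qed
  qed
  hence ai: "ai_set V E A'" using A'V by (simp add: ai_set_def)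
  obtain I where I: "I \<subseteq> A" "indep_set V E I" "card I = indep_number V E" by (rule exI')
  define I1 where "I1 = insert p (I - {y})"
  have I1: "indep_set V E I1" "card I \<le> card I1" "I1 \<subseteq> A"
    using swap[OF I(1,2) p(1,2)] p(3) unfolding I1_def by auto
  have "p \<noteq> y" using p(2) irr by blast
  hence "I1 \<subseteq> A'" using I1(3) unfolding I1_def A'_def by auto
  moreover have "card I1 = indep_number V E" using alpha_bound[OF I1(1)] I1(2) I(3) by simp
  ultimately have "ai_with_max_indep V E A'" using ai I1(1) by (auto simp: ai_with_max_indep_def)
  hence "card A' \<le> card A" by (rule maxA)
  moreover have "card A' = card A + 1"
  proof -
    have "z1 \<notin> A" "z2 \<notin> A" using z1Z z2Z by auto
    hence "card A' = card (A - {y}) + 2" unfolding A'_def using ne finA by simp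
    moreover have "card (A - {y}) + 1 = card A" using assms(1) finA
      by (metis Suc_eq_plus1 card_Suc_Diff1)
    ultimately show ?thesis by simp
  qed
  ultimately show False by simp
qed

end

theorem lemma8:
  fixes n :: nat and E :: "nat \<Rightarrow> nat \<Rightarrow> bool" and A :: "nat set"
  defines "V \<equiv> {1..n}"
  defines "B \<equiv> V - A"
  defines "Y \<equiv> {v \<in> A. card (nbrs E A v) = 1}"
  defines "Z \<equiv> {v \<in> B. card (nbrs E B v) = 1}"
  assumes "simple_graph V E" and "cubic V E" and "girth_ge_5 V E"
    and "mai_set V E A"
  shows "(\<forall>z \<in> Z. card (nbrs E Y z) \<le> 1) \<and> (\<forall>y \<in> Y. card (nbrs E Z y) \<le> 1)"
proof -
  interpret L V E A using assms(5-8) by unfold_locales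
  show ?thesis unfolding Y_def Z_def B_def using part1 part2 by auto
qed

end
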